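(* Equip $\mathfrak{M}$ with the inverse lexicographic term order determined by the total order $x_{1,2}>x_{1,3}>\cdots>x_{1,n}>x_{2,3}>x_{2,4}>\cdots>x_{2,n}>\cdots>x_{n-1,n}$ on the indeterminates (i.e., $x_{i,j}>x_{u,v}$ iff $i<u$, or $i=u$ and $j<v$). Then the set $$G=\{\,x_{i,k}x_{i,j}-x_{i,j}x_{j,k}+x_{i,k}x_{j,k}+\beta x_{i,k}+\alpha \ \mid\ 1\le i<j<k\le n\,\}$$ is a Gröbner basis of the ideal $\mathcal{J}$ of $\mathcal{X}$ with respect to this order.
   Context: Let $\mathbf{k}$ be a commutative ring, $\beta,\alpha\in\mathbf{k}$, $n$ a positive integer. Let $\mathcal{X}=\mathbf{k}[x_{i,j}\mid 1\le i<j\le n]$ be the polynomial ring in the indeterminates $x_{i,j}$, $\mathfrak{M}$ its set of monomials, and $\mathcal{J}$ the ideal generated by all $x_{i,j}x_{j,k}-x_{i,k}(x_{i,j}+x_{j,k}+\beta)-\alpha$ for $1\le i<j<k\le n$. Inverse lexicographic order determined by a total order on the indeterminates: for monomials $\mathfrak{m}=\prod\xi^{m_\xi}$, $\mathfrak{n}=\prod\xi^{n_\xi}$, $\mathfrak{m}\le\mathfrak{n}$ iff $\mathfrak{m}=\mathfrak{n}$ or the largest indeterminate $\xi$ with $m_\xi\neq n_\xi$ has $m_\xi<n_\xi$. For nonzero $f$, the head term $\operatorname{HT}(f)$ is the largest monomial with nonzero coefficient in $f$; $f$ is monic if that coefficient is $1$. For a set $G$ of monic polynomials, write $f\underset{G}{\longrightarrow}g$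 if there exist $p\in G$ and monomials $\mathfrak{t},\mathfrak{s}$ such that the coefficient $a$ of $\mathfrak{t}$ in $f$ is nonzero, $\mathfrak{s}\operatorname{HT}(p)=\mathfrak{t}$, and $g=f-a\,\mathfrak{s}\,p$; let $\overset{*}{\underset{G}{\longrightarrow}}$ be its reflexive-transitive closure. A set $G$ of monic polynomials is a Gröbner basis of an ideal $\mathcal{I}$ if $G$ generates $\mathcal{I}$ and every $p\in\mathcal{I}$ satisfies $p\overset{*}{\underset{G}{\longrightarrow}}0$ (equivalently, every polynomial reduces via $\overset{*}{\underset{G}{\longrightarrow}}$ to a unique polynomial that is a $\mathbf{k}$-linear combination of monomials not divisible by any $\operatorname{HT}(g)$, $g\in G$). *)

theory Defs
  imports "HOL-Library.Poly_Mapping"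
begin

text \<open>Indeterminates x_{i,j} are indexed by pairs (i,j); monomials are finitely
supported exponent vectors; polynomials with coefficients in 'k are finitely
supported maps from monomials to 'k (multiplication = convolution).\<close>

type_synonym mon = "(nat \<times> nat) \<Rightarrow>\<^sub>0 nat"
type_synonym 'k mpoly = "mon \<Rightarrow>\<^sub>0 'k"

definition Vars :: "nat \<Rightarrow> (nat \<times> nat) set" where
  "Vars n = {(i, j). 1 \<le> i \<and> i < j \<and> j \<le> n}"

definition Xring :: "nat \<Rightarrow> ('k::comm_ring_1) mpoly set" where
  "Xring n = {p :: 'k mpoly. \<forall>m \<in> Poly_Mapping.keys p. Poly_Mapping.keys m \<subseteq> Vars n}"

definition var :: "nat \<Rightarrow> nat \<Rightarrow> ('k::comm_ring_1) mpoly" where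
  "var i j = Poly_Mapping.single (Poly_Mapping.single (i, j) 1) 1"

definition const :: "'k::comm_ring_1 \<Rightarrow> 'k mpoly" where
  "const c = Poly_Mapping.single 0 c"

definition Triples :: "nat \<Rightarrow> (nat \<times> nat \<times> nat) set" where
  "Triples n = {(i, j, k). 1 \<le> i \<and> i < j \<and> j < k \<and> k \<le> n}"

definition Jgen :: "'k::comm_ring_1 \<Rightarrow> 'k \<Rightarrow> nat \<Rightarrow> nat \<Rightarrow> nat \<Rightarrow> 'k mpoly" where
  "Jgen \<beta> \<alpha> i j k =
     var i j * var j k - var i k * (var i j + var j k + const \<beta>) - const \<alpha>"

definition ideal_gen :: "nat \<Rightarrow> ('k::comm_ring_1) mpoly set \<Rightarrow> 'k mpoly set" where
  "ideal_gen n S = {p. \<exists>F q. finite F \<and> F \<subseteq> S \<and> (\<forall>f\<in>F. q f \<in> Xring n)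
                         \<and> p = (\<Sum>f\<in>F. q f * f)}"

definition Jideal :: "'k::comm_ring_1 \<Rightarrow> 'k \<Rightarrow> nat \<Rightarrow> 'k mpoly set" where
  "Jideal \<beta> \<alpha> n = ideal_gen n {Jgen \<beta> \<alpha> i j k | i j k. (i, j, k) \<in> Triples n}"

definition var_gt :: "nat \<times> nat \<Rightarrow> nat \<times> nat \<Rightarrow> bool" where
  "var_gt a b \<longleftrightarrow> fst a < fst b \<or> (fst a = fst b \<and> snd a < snd b)"

definition mon_le :: "(nat \<times> nat \<Rightarrow> nat \<times> nat \<Rightarrow> bool) \<Rightarrow> mon \<Rightarrow> mon \<Rightarrow> bool" where
  "mon_le gt m m' \<longleftrightarrow> m = m' \<or>
     (\<exists>\<xi>. Poly_Mapping.lookup m \<xi> < Poly_Mapping.lookup m' \<xi> \<and>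
          (\<forall>\<eta>. gt \<eta> \<xi> \<longrightarrow> Poly_Mapping.lookup m \<eta> = Poly_Mapping.lookup m' \<eta>))"

definition HT :: "(nat \<times> nat \<Rightarrow> nat \<times> nat \<Rightarrow> bool) \<Rightarrow> ('k::comm_ring_1) mpoly \<Rightarrow> mon" where
  "HT gt f = (THE m. m \<in> Poly_Mapping.keys f \<and> (\<forall>m' \<in> Poly_Mapping.keys f. mon_le gt m' m))"

definition monic :: "(nat \<times> nat \<Rightarrow> nat \<times> nat \<Rightarrow> bool) \<Rightarrow> ('k::comm_ring_1) mpoly \<Rightarrow> bool" where
  "monic gt f \<longleftrightarrow> f \<noteq> 0 \<and> Poly_Mapping.lookup f (HT gt f) = 1"

definition red :: "(nat \<times> nat \<Rightarrow> nat \<times> nat \<Rightarrow> bool) \<Rightarrow> ('k::comm_ring_1) mpoly set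
                    \<Rightarrow> 'k mpoly \<Rightarrow> 'k mpoly \<Rightarrow> bool" where
  "red gt G f g \<longleftrightarrow> (\<exists>p \<in> G. \<exists>t s. Poly_Mapping.lookup f t \<noteq> 0 \<and> s + HT gt p = t
                        \<and> g = f - Poly_Mapping.single s (Poly_Mapping.lookup f t) * p)"

definition is_groebner_basis ::
  "(nat \<times> nat \<Rightarrow> nat \<times> nat \<Rightarrow> bool) \<Rightarrow> nat \<Rightarrow> ('k::comm_ring_1) mpoly set \<Rightarrow> 'k mpoly set \<Rightarrow> bool" where
  "is_groebner_basis gt n G I \<longleftrightarrow>
     (\<forall>g \<in> G. monic gt g) \<and> ideal_gen n G = I \<and> (\<forall>p \<in> I. (red gt G)\<^sup>*\<^sup>* p 0)"

end

theory Submission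
  imports Defs "HOL-Library.Product_Lexorder"
begin

abbreviation lk where "lk \<equiv> Poly_Mapping.lookup"
abbreviation sg where "sg \<equiv> Poly_Mapping.single"
abbreviation ks where "ks \<equiv> Poly_Mapping.keys"

lemma var_gt_iff: "var_gt a b \<longleftrightarrow> a < b"
  by (auto simp: var_gt_def less_prod_def')

lemma mon_le_iff: "mon_le var_gt m m' \<longleftrightarrow> m \<le> m'"
  unfolding mon_le_def var_gt_iff less_eq_poly_mapping.rep_eq less_fun_def lookup_inject
  by (rule iffI) (erule disjE; blast)+

lemma mon_lessI:
  fixes m m' :: mon
  assumes "lk m k < lk m' k" "\<And>k'. k' < k \<Longrightarrow> lk m k' = lk m' k'"
  shows "m < m'"
  using assms unfolding less_poly_mapping.rep_eq less_fun_def by blast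

abbreviation ht :: "'k::comm_ring_1 mpoly \<Rightarrow> mon" where "ht p \<equiv> HT var_gt p"

lemma HT_eqI:
  fixes p :: "'k::comm_ring_1 mpoly"
  assumes "m \<in> ks p" "\<And>m'. m' \<in> ks p \<Longrightarrow> m' \<le> m"
  shows "ht p = m"
  unfolding HT_def mon_le_iff
  by (rule the_equality) (use assms in \<open>auto intro: antisym\<close>)

lemma HT_props:
  fixes p :: "'k::comm_ring_1 mpoly"
  assumes "p \<noteq> 0"
  shows "ht p \<in> ks p" "\<And>m'. m' \<in> ks p \<Longrightarrow> m' \<le> ht p"
proof -
  have ne: "ks p \<noteq> {}" using assms by simp
  have h: "ht p = Max (ks p)"
    by (rule HT_eqI) (use ne in auto)
  show "ht p \<in> ks p" unfolding h using ne by simp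
  show "\<And>m'. m' \<in> ks p \<Longrightarrow> m' \<le> ht p" unfolding h by simp
qed

lemma expand_pm: "p = (\<Sum>t\<in>ks p. sg t (lk p t))"
  by (rule poly_mapping_eqI) (auto simp: lookup_sum lookup_single when_def in_keys_iff)

lemma single_mult_expand:
  fixes g :: "'k::comm_ring_1 mpoly"
  shows "sg s c * g = (\<Sum>u\<in>ks g. sg (s+u) (c * lk g u))"
proof -
  have "sg s c * g = sg s c * (\<Sum>t\<in>ks g. sg t (lk g t))"
    by (rule arg_cong[OF expand_pm])
  also have "\<dots> = (\<Sum>u\<in>ks g. sg (s+u) (c * lk g u))"
    by (simp add: sum_distrib_left mult_single)
  finally show ?thesis .
qed

lemma keys_single_mult:
  fixes g :: "'k::comm_ring_1 mpoly"
  shows "ks (sg s c * g) \<subseteq> (+) s ` ks g"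
proof
  fix x assume "x \<in> ks (sg s c * g)"
  then have "lk (sg s c * g) x \<noteq> 0" by (simp add: in_keys_iff)
  then obtain u where "u \<in> ks g" "lk (sg (s+u) (c * lk g u)) x \<noteq> 0"
  proof -
    have "(\<Sum>u\<in>ks g. lk (sg (s+u) (c * lk g u)) x) \<noteq> 0"
      using \<open>lk (sg s c * g) x \<noteq> 0\<close> unfolding single_mult_expand[of s c g] lookup_sum .
    then show ?thesis using that by (meson sum.not_neutral_contains_not_neutral)
  qed
  then show "x \<in> (+) s ` ks g" by (auto simp: lookup_single when_def split: if_splits)
qed

lemma lookup_single_mult:
  fixes g :: "'k::comm_ring_1 mpoly"
  shows "lk (sg s c * g) (s + u) = c * lk g u"
proof -
  have "lk (sg s c * g) (s + u) = (\<Sum>u'\<in>ks g. (c * lk g u') when u' = u)"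
    by (subst single_mult_expand) (simp add: lookup_sum lookup_single when_def eq_commute)
  also have "\<dots> = c * lk g u"
    by (cases "u \<in> ks g") (auto simp: when_def in_keys_iff)
  finally show ?thesis .
qed

definition MV :: "(nat \<times> nat) set \<Rightarrow> mon set" where "MV V = {m. ks m \<subseteq> V}"

lemma wf_mon: 
  assumes "finite V"
  shows "wf {(a, b). a < b \<and> a \<in> MV V \<and> (b::mon) \<in> MV V}"
proof -
  obtain xs where xs: "sorted_wrt (<) xs" "set xs = V" "length xs = card V"
    by (rule finite_set_strict_sorted[OF assms])
  define f where "f m = map (lk m) xs" for m :: mon
  have "{(a, b). a < b \<and> a \<in> MV V \<and> (b::mon) \<in> MV V} \<subseteq> inv_image (lex less_than) f"
  proof clarify
    fix a b :: mon assume ab: "a < b" "a \<in> MV V" "b \<in> MV V"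
    then obtain k where k: "lk a k < lk b k" "\<And>k'. k' < k \<Longrightarrow> lk a k' = lk b k'"
      unfolding less_poly_mapping.rep_eq less_fun_def by blast
    have "k \<in> ks b" using k(1) by (simp add: in_keys_iff)
    then have "k \<in> set xs" using ab(3) xs(2) by (auto simp: MV_def)
    then obtain p where p: "p < length xs" "xs ! p = k" by (auto simp: in_set_conv_nth)
    have eq: "map (lk a) (take p xs) = map (lk b) (take p xs)"
    proof (rule map_cong[OF refl])
      fix x assume "x \<in> set (take p xs)"
      then obtain q where "q < p" "x = xs ! q" using p(1)
        by (auto simp: in_set_conv_nth)
      then have "x < k" using sorted_wrt_nth_less[OF xs(1), of q p] p by auto
      then show "lk a x = lk b x" using k(2) by blast
    qed
    have xseq: "xs = take p xs @ k # drop (Suc p) xs"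
      using id_take_nth_drop[OF p(1)] p(2) by simp
    have fa: "f a = map (lk a) (take p xs) @ lk a k # map (lk a) (drop (Suc p) xs)"
    proof -
      have "f a = map (lk a) (take p xs @ k # drop (Suc p) xs)"
        unfolding f_def by (rule arg_cong[OF xseq])
      then show ?thesis by simp
    qed
    have fb: "f b = map (lk a) (take p xs) @ lk b k # map (lk b) (drop (Suc p) xs)"
    proof -
      have "f b = map (lk b) (take p xs @ k # drop (Suc p) xs)"
        unfolding f_def by (rule arg_cong[OF xseq])
      then show ?thesis using eq by simp
    qed
    have len: "length (f a) = length (f b)" by (simp add: f_def)
    have lt: "(lk a k, lk b k) \<in> less_than" using k(1) by simp
    have "(f a, f b) \<in> lex less_than"
      unfolding lex_conv using len fa fb lt by blast
    then show "(a, b) \<in> inv_image (lex less_than) f" by simp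
  qed
  then show ?thesis by (rule wf_subset[OF wf_inv_image[OF wf_lex[OF wf_less_than]]])
qed

definition X :: "nat \<Rightarrow> nat \<Rightarrow> mon" where "X u v = sg (u, v) 1"

lemma X_less: "(u, v) < (u', v') \<Longrightarrow> X u' v' < X u v"
  unfolding X_def
  by (rule mon_lessI[of _ "(u,v)"]) (auto simp: lookup_single when_def)

lemma mon_pos: "(m::mon) \<noteq> 0 \<Longrightarrow> 0 < m"
proof -
  assume "m \<noteq> 0"
  then have ne: "ks m \<noteq> {}" by simp
  show "0 < m"
  proof (rule mon_lessI[of _ "Min (ks m)"])
    show "lk 0 (Min (ks m)) < lk m (Min (ks m))"
      using Min_in[OF finite_keys ne] by (simp add: in_keys_iff)
    fix k' assume "k' < Min (ks m)"
    then have "k' \<notin> ks m" by (meson Min_le[OF finite_keys[of m]] leD)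
    then show "lk 0 k' = lk m k'" by (simp add: in_keys_iff)
  qed
qed

lemma mon_le_add: "(m::mon) \<le> s + m"
proof (cases "s = 0")
  case False
  then have "0 + m < s + m" using mon_pos add_strict_right_mono by blast
  then show ?thesis by simp
qed simp

lemma keys_add_sub: "ks (a + b) \<subseteq> ks a \<union> ks (b :: mon)"
  by (rule keys_add)

inductive rep :: "'k::comm_ring_1 mpoly set \<Rightarrow> (nat \<times> nat) set \<Rightarrow> (mon \<Rightarrow> bool) \<Rightarrow> 'k mpoly \<Rightarrow> bool"
  for G V P where
  rep_zero: "rep G V P 0"
| rep_step: "rep G V P p \<Longrightarrow> g \<in> G \<Longrightarrow> s \<in> MV V \<Longrightarrow> P (s + ht g) \<Longrightarrow> rep G V P (p + sg s c * g)"

lemma rep_term: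
  assumes "g \<in> G" "s \<in> MV V" "P (s + ht g)" shows "rep G V P (sg s c * g)"
proof -
  have "rep G V P (0 + sg s c * g)" by (rule rep_step[where P=P, OF rep_zero assms])
  then show ?thesis by simp
qed

lemma rep_add: "rep G V P q \<Longrightarrow> rep G V P p \<Longrightarrow> rep G V P (p + q)"
proof (induction rule: rep.induct)
  case rep_zero then show ?case by simp
next
  case (rep_step q g s c)
  then show ?case using rep.rep_step[OF rep_step.IH[OF rep_step.prems] rep_step.hyps(2-4), of c]
    by (simp add: add.assoc)
qed

lemma rep_uminus: "rep G V P p \<Longrightarrow> rep G V P (- p)"
proof (induction rule: rep.induct)
  case rep_zero then show ?case by (simp add: rep.rep_zero)
next
  case (rep_step p g s c)
  have "- (p + sg s c * g) = - p + sg s (- c) * g" by (simp add: single_uminus)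
  then show ?case using rep.rep_step[OF rep_step.IH rep_step.hyps(2-4)] by simp
qed

lemma rep_diff: "rep G V P p \<Longrightarrow> rep G V P q \<Longrightarrow> rep G V P (p - q)"
  using rep_add[OF rep_uminus] by (metis diff_conv_add_uminus)

lemma rep_mono: "rep G V P p \<Longrightarrow> (\<And>t. P t \<Longrightarrow> Q t) \<Longrightarrow> rep G V Q p"
  by (induction rule: rep.induct) (auto intro: rep.intros)

lemma MV_add: "a \<in> MV V \<Longrightarrow> b \<in> MV V \<Longrightarrow> a + b \<in> MV V"
  using keys_add[of a b] by (auto simp: MV_def)

lemma rep_shift:
  assumes "rep G V P p" "w \<in> MV V" "\<And>t. P t \<Longrightarrow> Q (w + t)"
  shows "rep G V Q (sg w c * p)"
  using assms(1)
proof (induction rule: rep.induct)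
  case rep_zero then show ?case by (simp add: rep.rep_zero)
next
  case (rep_step p g s d)
  have "sg w c * (p + sg s d * g) = sg w c * p + sg (w + s) (c * d) * g"
    by (simp add: distrib_left mult_single mult.assoc[symmetric])
  moreover have "rep G V Q (sg w c * p + sg (w + s) (c * d) * g)"
    using rep.rep_step[OF rep_step.IH rep_step.hyps(2) MV_add[OF assms(2) rep_step.hyps(3)]]
      assms(3)[OF rep_step.hyps(4)] by (simp add: add.assoc)
  ultimately show ?case by simp
qed

lemma rep_sum: "finite F \<Longrightarrow> (\<And>x. x \<in> F \<Longrightarrow> rep G V P (f x)) \<Longrightarrow> rep G V P (sum f F)"
  by (induction rule: finite_induct) (auto intro: rep_add rep_zero)

locale gbctx =
  fixes G :: "'k::comm_ring_1 mpoly set" and V :: "(nat \<times> nat) set"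
  assumes finV: "finite V"
    and monicG: "\<And>g. g \<in> G \<Longrightarrow> g \<noteq> 0 \<and> lk g (ht g) = 1"
    and keysG: "\<And>g t. g \<in> G \<Longrightarrow> t \<in> ks g \<Longrightarrow> t \<in> MV V"
    and spolyG: "\<And>g h a b. g \<in> G \<Longrightarrow> h \<in> G \<Longrightarrow> a \<in> MV V \<Longrightarrow> b \<in> MV V \<Longrightarrow>
       a + ht g = b + ht h \<Longrightarrow> rep G V (\<lambda>t. t < a + ht g) (sg a 1 * g - sg b 1 * h)"
begin

lemma ht_MV: "g \<in> G \<Longrightarrow> ht g \<in> MV V"
  using keysG HT_props(1) monicG by blast

lemma keys_term:
  assumes "g \<in> G" "u \<in> ks (sg s c * g)"
  shows "u \<le> s + ht g"
proof -
  obtain u' where "u' \<in> ks g" "u = s + u'" using keys_single_mult assms(2) by blast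
  moreover have "u' \<le> ht g" using HT_props(2) monicG assms(1) \<open>u' \<in> ks g\<close> by blast
  ultimately show ?thesis by (simp add: add_left_mono)
qed

lemma keys_term_MV:
  assumes "g \<in> G" "s \<in> MV V" "u \<in> ks (sg s c * g)"
  shows "u \<in> MV V"
proof -
  obtain u' where "u' \<in> ks g" "u = s + u'" using keys_single_mult assms(3) by blast
  then show ?thesis using MV_add[OF assms(2) keysG[OF assms(1) \<open>u' \<in> ks g\<close>]] by simp
qed

lemma keys_rep:
  "rep G V P p \<Longrightarrow> u \<in> ks p \<Longrightarrow> \<exists>s g. g \<in> G \<and> s \<in> MV V \<and> P (s + ht g) \<and> u \<le> s + ht g \<and> u \<in> MV V"
proof (induction rule: rep.induct)
  case rep_zero then show ?case by simp
next
  case (rep_step p g s c)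
  from rep_step.prems have "u \<in> ks p \<or> u \<in> ks (sg s c * g)"
    using keys_add[of p "sg s c * g"] by blast
  then show ?case
  proof
    assume "u \<in> ks p" then show ?thesis by (rule rep_step.IH)
  next
    assume u: "u \<in> ks (sg s c * g)"
    have "u \<le> s + ht g" by (rule keys_term[OF rep_step.hyps(2) u])
    moreover have "u \<in> MV V" by (rule keys_term_MV[OF rep_step.hyps(2,3) u])
    ultimately show ?thesis using rep_step.hyps(2,3,4) by (intro exI[of _ s] exI[of _ g]) simp
  qed
qed

lemma lookup_lt: "rep G V (\<lambda>t. t < T) p \<Longrightarrow> lk p T = 0"
  using keys_rep[of "\<lambda>t. t < T" p T] by (meson in_keys_iff leD)

lemma lookup_top: "g \<in> G \<Longrightarrow> lk (sg s c * g) (s + ht g) = c"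
  using lookup_single_mult monicG by (metis mult.right_neutral)

lemma rep_E: "rep G V (\<lambda>t. t \<le> T) p \<Longrightarrow> rep G V (\<lambda>t. t < T) p \<or> (\<exists>s g. g \<in> G \<and> s \<in> MV V \<and> s + ht g = T)"
proof (induction rule: rep.induct)
  case rep_zero then show ?case by (simp add: rep.rep_zero)
next
  case (rep_step p g s c)
  show ?case
  proof (cases "s + ht g = T")
    case True then show ?thesis using rep_step.hyps by blast
  next
    case False
    then have "s + ht g < T" using rep_step.hyps(4) by simp
    then show ?thesis using rep_step.IH rep.rep_step[OF _ rep_step.hyps(2,3), of "\<lambda>t. t < T"] by blast
  qed
qed

lemma rep_D:
  assumes "rep G V (\<lambda>t. t \<le> T) p" "g0 \<in> G" "s0 \<in> MV V" "s0 + ht g0 = T"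
  shows "\<exists>q. rep G V (\<lambda>t. t < T) q \<and> p = q + sg s0 (lk p T) * g0"
  using assms(1)
proof (induction rule: rep.induct)
  case rep_zero then show ?case by (auto intro: rep.rep_zero)
next
  case (rep_step p g s c)
  obtain q where q: "rep G V (\<lambda>t. t < T) q" "p = q + sg s0 (lk p T) * g0" using rep_step.IH by blast
  show ?case
  proof (cases "s + ht g = T")
    case False
    then have lt: "s + ht g < T" using rep_step.hyps(4) by simp
    have rt: "rep G V (\<lambda>t. t < T) (sg s c * g)" by (rule rep_term[OF rep_step.hyps(2,3)]) (use lt in simp)
    have l0: "lk (sg s c * g) T = 0" by (rule lookup_lt[OF rt])
    have "rep G V (\<lambda>t. t < T) (q + sg s c * g)" by (rule rep_add[OF rt q(1)])
    moreover have "p + sg s c * g = (q + sg s c * g) + sg s0 (lk (p + sg s c * g) T) * g0"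
      using q(2) l0 by (simp add: lookup_add algebra_simps)
    ultimately show ?thesis by blast
  next
    case True
    have sp: "rep G V (\<lambda>t. t < T) (sg s 1 * g - sg s0 1 * g0)"
      using spolyG[OF rep_step.hyps(2) assms(2) rep_step.hyps(3) assms(3)] True assms(4) by simp
    have sp2: "rep G V (\<lambda>t. t < T) (sg 0 c * (sg s 1 * g - sg s0 1 * g0))"
      by (rule rep_shift[OF sp]) (auto simp: MV_def)
    have lc: "lk (sg s c * g) T = c" using lookup_top[OF rep_step.hyps(2), of s c] True by simp
    have "rep G V (\<lambda>t. t < T) (q + sg 0 c * (sg s 1 * g - sg s0 1 * g0))" by (rule rep_add[OF sp2 q(1)])
    moreover have "p + sg s c * g = (q + sg 0 c * (sg s 1 * g - sg s0 1 * g0)) + sg s0 (lk (p + sg s c * g) T) * g0"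
      using q(2) lc by (simp add: lookup_add algebra_simps mult_single single_add mult.assoc[symmetric])
    ultimately show ?thesis by blast
  qed
qed

lemma rep_bound: "rep G V P p \<Longrightarrow> p = 0 \<or> (\<exists>T. T \<in> MV V \<and> P T \<and> rep G V (\<lambda>t. t \<le> T) p)"
proof (induction rule: rep.induct)
  case rep_zero then show ?case by simp
next
  case (rep_step p g s c)
  have TM: "s + ht g \<in> MV V" using MV_add[OF rep_step.hyps(3) ht_MV[OF rep_step.hyps(2)]] .
  from rep_step.IH show ?case
  proof
    assume "p = 0"
    then have "rep G V (\<lambda>t. t \<le> s + ht g) (p + sg s c * g)"
      using rep.rep_step[OF rep.rep_zero rep_step.hyps(2,3), of "\<lambda>t. t \<le> s + ht g"] by simp
    then show ?thesis using TM rep_step.hyps(4) by blast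
  next
    assume "\<exists>T. T \<in> MV V \<and> P T \<and> rep G V (\<lambda>t. t \<le> T) p"
    then obtain T where T: "T \<in> MV V" "P T" "rep G V (\<lambda>t. t \<le> T) p" by blast
    define T' where "T' = max T (s + ht g)"
    have "T' \<in> MV V" "P T'" using T TM rep_step.hyps(4) by (auto simp: T'_def max_def)
    moreover have "rep G V (\<lambda>t. t \<le> T') p" by (rule rep_mono[OF T(3)]) (simp add: T'_def le_max_iff_disj)
    then have "rep G V (\<lambda>t. t \<le> T') (p + sg s c * g)"
      by (rule rep.rep_step[OF _ rep_step.hyps(2,3)]) (simp add: T'_def)
    ultimately show ?thesis by blast
  qed
qed

lemma rep_main:
  "T \<in> MV V \<Longrightarrow> rep G V (\<lambda>t. t \<le> T) p \<Longrightarrow> p \<noteq> 0 \<Longrightarrow> \<exists>s g. g \<in> G \<and> s \<in> MV V \<and> s + ht g = ht p"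
proof (induction T arbitrary: p rule: wf_induct_rule[OF wf_mon[OF finV]])
  case (1 T p)
  show ?case
  proof (cases "lk p T = 0")
    case False
    then have Tk: "T \<in> ks p" by (simp add: in_keys_iff)
    have "\<And>u. u \<in> ks p \<Longrightarrow> u \<le> T" using keys_rep[OF "1.prems"(2)] by fastforce
    then have "ht p = T" using HT_eqI Tk by blast
    moreover have "\<not> rep G V (\<lambda>t. t < T) p" using lookup_lt False by blast
    ultimately show ?thesis using rep_E[OF "1.prems"(2)] by metis
  next
    case True
    have "rep G V (\<lambda>t. t < T) p"
    proof -
      { assume "\<exists>s g. g \<in> G \<and> s \<in> MV V \<and> s + ht g = T"
        then obtain s g where "g \<in> G" "s \<in> MV V" "s + ht g = T" by blast
        from rep_D[OF "1.prems"(2) this] obtain q where "rep G V (\<lambda>t. t < T) q" "p = q + sg s (lk p T) * g"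
          by blast
        then have ?thesis using True by simp }
      then show ?thesis using rep_E[OF "1.prems"(2)] by blast
    qed
    from rep_bound[OF this] obtain T' where T': "T' \<in> MV V" "T' < T" "rep G V (\<lambda>t. t \<le> T') p"
      using "1.prems"(3) by blast
    show ?thesis using "1.IH"[of T' p] T' "1.prems" by blast
  qed
qed

lemma rep_final: "rep G V (\<lambda>_. True) p \<Longrightarrow> p \<noteq> 0 \<Longrightarrow> \<exists>s g. g \<in> G \<and> s \<in> MV V \<and> s + ht g = ht p"
  using rep_bound rep_main by blast

lemma red_zero: "rep G V (\<lambda>_. True) p \<Longrightarrow> (red var_gt G)\<^sup>*\<^sup>* p 0"
proof (cases "p = 0")
  case True then show "rep G V (\<lambda>_. True) p \<Longrightarrow> (red var_gt G)\<^sup>*\<^sup>* p 0" by simp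
next
  case False
  assume r: "rep G V (\<lambda>_. True) p"
  have "ht p \<in> MV V" using keys_rep[OF r HT_props(1)[OF False]] by blast
  have main: "\<And>p. T \<in> MV V \<Longrightarrow> rep G V (\<lambda>_. True) p \<Longrightarrow> p \<noteq> 0 \<Longrightarrow> ht p = T \<Longrightarrow> (red var_gt G)\<^sup>*\<^sup>* p 0" for T
  proof (induction T rule: wf_induct_rule[OF wf_mon[OF finV]])
    case (1 T p)
    obtain s g where sg: "g \<in> G" "s \<in> MV V" "s + ht g = ht p" using rep_final "1.prems" by blast
    define c where "c = lk p (ht p)"
    have c0: "c \<noteq> 0" using HT_props(1)[OF "1.prems"(3)] by (simp add: c_def in_keys_iff)
    define p' where "p' = p - sg s c * g"
    have step: "red var_gt G p p'"
      unfolding red_def p'_def c_def using sg c0 c_def by blast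
    have rp': "rep G V (\<lambda>_. True) p'"
    proof -
      have "rep G V (\<lambda>_. True) (p + sg s (-c) * g)" by (rule rep_step[OF "1.prems"(2) sg(1,2)]) simp
      moreover have "p + sg s (-c) * g = p'" by (simp add: p'_def single_uminus)
      ultimately show ?thesis by simp
    qed
    show ?case
    proof (cases "p' = 0")
      case True then show ?thesis using step by auto
    next
      case False
      have le: "u \<le> ht p" if "u \<in> ks p'" for u
      proof -
        have "u \<in> ks p \<or> u \<in> ks (sg s c * g)" using that keys_add[of p "sg s (-c) * g"]
          by (auto simp: p'_def single_uminus)
        then show ?thesis using HT_props(2)[OF "1.prems"(3)] keys_term[OF sg(1)] sg(3) by metis
      qed
      have "lk p' (ht p) = 0"
        using lookup_top[OF sg(1), of s c] sg(3) by (simp add: p'_def lookup_minus c_def)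
      then have "ht p' \<noteq> ht p" using HT_props(1)[OF False] by (auto simp: in_keys_iff)
      then have lt: "ht p' < ht p" using le[OF HT_props(1)[OF False]] by simp
      have "ht p' \<in> MV V" using keys_rep[OF rp' HT_props(1)[OF False]] by blast
      then have "(red var_gt G)\<^sup>*\<^sup>* p' 0" using "1.IH" lt "1.prems" rp' False by blast
      then show ?thesis using step by (meson converse_rtranclp_into_rtranclp)
    qed
  qed
  show "(red var_gt G)\<^sup>*\<^sup>* p 0" by (rule main[OF \<open>ht p \<in> MV V\<close> r False refl])
qed

end

lemma ideal_rep:
  fixes G :: "'k::comm_ring_1 mpoly set"
  assumes "p \<in> ideal_gen n G"
  shows "rep G (Vars n) (\<lambda>_. True) p"
proof -
  obtain F q where F: "finite F" "F \<subseteq> G" "\<And>f. f \<in> F \<Longrightarrow> q f \<in> Xring n" "p = (\<Sum>f\<in>F. q f * f)"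
    using assms unfolding ideal_gen_def by blast
  have "rep G (Vars n) (\<lambda>_. True) (q f * f)" if f: "f \<in> F" for f
  proof -
    have "q f * f = (\<Sum>t\<in>ks (q f). sg t (lk (q f) t)) * f" by (rule arg_cong[OF expand_pm])
    also have "\<dots> = (\<Sum>t\<in>ks (q f). sg t (lk (q f) t) * f)" by (rule sum_distrib_right)
    finally have e: "q f * f = (\<Sum>t\<in>ks (q f). sg t (lk (q f) t) * f)" .
    have "rep G (Vars n) (\<lambda>_. True) (\<Sum>t\<in>ks (q f). sg t (lk (q f) t) * f)"
    proof (rule rep_sum[OF finite_keys])
      fix t assume "t \<in> ks (q f)"
      then have "t \<in> MV (Vars n)" using F(3)[OF f] by (auto simp: Xring_def MV_def)
      then show "rep G (Vars n) (\<lambda>_. True) (sg t (lk (q f) t) * f)"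
        using rep_term[of f G t "Vars n" "\<lambda>_. True"] F(2) f by blast
    qed
    then show ?thesis using e by simp
  qed
  then show ?thesis unfolding F(4) by (rule rep_sum[OF F(1)])
qed

definition gen :: "'k::comm_ring_1 \<Rightarrow> 'k \<Rightarrow> nat \<Rightarrow> nat \<Rightarrow> nat \<Rightarrow> 'k mpoly" where
  "gen \<beta> \<alpha> i j k = var i k * var i j - var i j * var j k + var i k * var j k
              + const \<beta> * var i k + const \<alpha>"

lemma var_X: "var i j = sg (X i j) 1"
  by (simp add: var_def X_def)

lemma gen_singles: "gen \<beta> \<alpha> i j k = sg (X i k + X i j) 1 - sg (X i j + X j k) 1 + sg (X i k + X j k) 1
    + sg (X i k) \<beta> + sg 0 \<alpha>"
  by (simp add: gen_def var_X const_def mult_single)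

lemma keys_diff_sub: "ks (p - q) \<subseteq> ks p \<union> ks (q::'k::comm_ring_1 mpoly)"
  by (auto simp: in_keys_iff lookup_minus)

lemma keys_gen: "ks (gen \<beta> \<alpha> i j k) \<subseteq> {X i k + X i j, X i j + X j k, X i k + X j k, X i k, 0}"
proof -
  have "ks (gen \<beta> \<alpha> i j k) \<subseteq> ks (sg (X i k + X i j) (1::'a)) \<union> ks (sg (X i j + X j k) (1::'a)) \<union>
     ks (sg (X i k + X j k) (1::'a)) \<union> ks (sg (X i k) \<beta>) \<union> ks (sg 0 \<alpha>)"
    unfolding gen_singles using keys_add keys_diff_sub by (smt (verit) Un_iff subset_iff)
  then show ?thesis by (auto split: if_splits)
qed

lemma ks_X: "ks (X u v) = {(u, v)}" by (simp add: X_def)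

lemma X_less': "(u, v) < (u', v') \<Longrightarrow> X u' v' < X u v" by (rule X_less)

lemma X_ne0: "X u v \<noteq> 0"
proof
  assume "X u v = 0"
  then have "lk (X u v) (u,v) = 0" by simp
  then show False by (simp add: X_def)
qed

lemma gen_ht_and_lk:
  assumes "i < j" "j < k"
  shows "ht (gen \<beta> \<alpha> i j k) = X i j + X i k" "lk (gen \<beta> \<alpha> i j k) (X i j + X i k) = 1"
proof -
  let ?M = "X i j + X i k"
  have l2: "X i j + X j k < ?M" using X_less[of i k j k] assms by (simp add: add_strict_left_mono)
  have l3: "X i k + X j k < ?M" using X_less[of i j j k] assms add_strict_left_mono[of "X j k" "X i j" "X i k"]
    by (simp add: add.commute)
  have l4: "X i k < ?M" using mon_pos[OF X_ne0[of i j]] add_strict_right_mono[of 0 "X i j" "X i k"] by simp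
  have l5: "0 < ?M" using l4 mon_pos[OF X_ne0[of i k]] by simp
  have e1: "X i k + X i j = ?M" by (simp add: add.commute)
  have n2: "X i j + X j k \<noteq> ?M" "X i k + X j k \<noteq> ?M" "X i k \<noteq> ?M" "0 \<noteq> ?M"
    using l2 l3 l4 l5 by auto
  show lk: "lk (gen \<beta> \<alpha> i j k) ?M = 1"
    unfolding gen_singles e1 
    by (simp only: lookup_add lookup_minus lookup_single_eq lookup_single_not_eq[OF n2(1)]
      lookup_single_not_eq[OF n2(2)] lookup_single_not_eq[OF n2(3)] lookup_single_not_eq[OF n2(4)]) simp
  show "ht (gen \<beta> \<alpha> i j k) = ?M"
  proof (rule HT_eqI)
    show "?M \<in> ks (gen \<beta> \<alpha> i j k)" using lk by (simp add: in_keys_iff)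
    fix m' assume "m' \<in> ks (gen \<beta> \<alpha> i j k)"
    then show "m' \<le> ?M" using keys_gen[of \<beta> \<alpha> i j k] e1 l2 l3 l4 l5 by auto
  qed
qed

lemma S12_id:
  fixes \<beta> \<alpha> :: "'k::comm_ring_1"
  shows "var i c * gen \<beta> \<alpha> i a b - var i b * gen \<beta> \<alpha> i a c =
    var a c * gen \<beta> \<alpha> i a b - var a b * gen \<beta> \<alpha> i a c + var a b * gen \<beta> \<alpha> i b c
    - var a c * gen \<beta> \<alpha> i b c - var i b * gen \<beta> \<alpha> a b c + var i c * gen \<beta> \<alpha> a b c"
  unfolding gen_def by (simp add: algebra_simps)

lemma S13_id:
  fixes \<beta> \<alpha> :: "'k::comm_ring_1"
  shows "var i c * gen \<beta> \<alpha> i a b - var i a * gen \<beta> \<alpha> i b c =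
    var b c * gen \<beta> \<alpha> i a b - var a b * gen \<beta> \<alpha> i a c - var b c * gen \<beta> \<alpha> i a c
    - const \<beta> * gen \<beta> \<alpha> i a c - var i a * gen \<beta> \<alpha> a b c + var a b * gen \<beta> \<alpha> i b c
    + const \<beta> * gen \<beta> \<alpha> i b c + var i c * gen \<beta> \<alpha> a b c"
  unfolding gen_def by (simp add: algebra_simps)

lemma S23_id:
  fixes \<beta> \<alpha> :: "'k::comm_ring_1"
  shows "var i b * gen \<beta> \<alpha> i a c - var i a * gen \<beta> \<alpha> i b c =
    - var a c * gen \<beta> \<alpha> i a b + var b c * gen \<beta> \<alpha> i a b - var b c * gen \<beta> \<alpha> i a c
    - const \<beta> * gen \<beta> \<alpha> i a c - var i a * gen \<beta> \<alpha> a b c + var a c * gen \<beta> \<alpha> i b c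
    + const \<beta> * gen \<beta> \<alpha> i b c + var i b * gen \<beta> \<alpha> a b c"
  unfolding gen_def by (simp add: algebra_simps)

lemma rep_lt_term:
  "g \<in> G \<Longrightarrow> s \<in> MV V \<Longrightarrow> s + ht g < T \<Longrightarrow> rep G V (\<lambda>t. t < T) (sg s c * g)"
  by (rule rep_term) auto

lemma tail_keys:
  fixes g :: "'k::comm_ring_1 mpoly"
  assumes "g \<noteq> 0" "lk g (ht g) = 1" "t \<in> ks (g - sg (ht g) 1)"
  shows "t \<in> ks g \<and> t < ht g"
proof -
  have ne: "t \<noteq> ht g"
  proof
    assume "t = ht g"
    then have "lk (g - sg (ht g) 1) t = 0" using assms(2) by (simp add: lookup_minus)
    then show False using assms(3) by (simp add: in_keys_iff)
  qed
  then have "lk (g - sg (ht g) 1) t = lk g t" by (simp add: lookup_minus lookup_single_not_eq)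
  then have "t \<in> ks g" using assms(3) by (simp add: in_keys_iff)
  then show ?thesis using HT_props(2)[OF assms(1)] ne by (simp add: order.not_eq_order_implies_strict)
qed

lemma rep_tail_mult:
  fixes g h :: "'k::comm_ring_1 mpoly"
  assumes "g \<noteq> 0" "lk g (ht g) = 1" "\<And>t. t \<in> ks g \<Longrightarrow> t \<in> MV V" "h \<in> G"
  shows "rep G V (\<lambda>t. t < ht g + ht h) ((g - sg (ht g) 1) * h)"
proof -
  let ?tg = "g - sg (ht g) 1"
  have "?tg * h = (\<Sum>t\<in>ks ?tg. sg t (lk ?tg t)) * h" by (rule arg_cong[OF expand_pm])
  also have "\<dots> = (\<Sum>t\<in>ks ?tg. sg t (lk ?tg t) * h)" by (rule sum_distrib_right)
  finally have e: "?tg * h = (\<Sum>t\<in>ks ?tg. sg t (lk ?tg t) * h)" .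
  have "rep G V (\<lambda>t. t < ht g + ht h) (\<Sum>t\<in>ks ?tg. sg t (lk ?tg t) * h)"
  proof (rule rep_sum[OF finite_keys])
    fix t assume t: "t \<in> ks ?tg"
    from tail_keys[OF assms(1,2) t] have "t \<in> ks g" "t < ht g" by auto
    then show "rep G V (\<lambda>t. t < ht g + ht h) (sg t (lk ?tg t) * h)"
      using assms(3,4) by (intro rep_lt_term) (auto simp: add_strict_right_mono)
  qed
  then show ?thesis using e by simp
qed

lemma prod_crit:
  fixes G :: "'k::comm_ring_1 mpoly set"
  assumes gG: "g \<in> G" and hG: "h \<in> G"
  and mg: "g \<noteq> 0" "lk g (ht g) = 1" and mh: "h \<noteq> 0" "lk h (ht h) = 1"
  and kg: "\<And>t. t \<in> ks g \<Longrightarrow> t \<in> MV V" and kh: "\<And>t. t \<in> ks h \<Longrightarrow> t \<in> MV V"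
  and disj: "ks (ht g) \<inter> ks (ht h) = {}"
  and ab: "a \<in> MV V" "a + ht g = b + ht h"
  shows "rep G V (\<lambda>t. t < a + ht g) (sg a 1 * g - sg b 1 * h)"
proof -
  define x where "x = ht g"
  define y where "y = ht h"
  define w where "w = a - y"
  have eqk: "lk a k + lk x k = lk b k + lk y k" for k
    using arg_cong[OF ab(2), of "\<lambda>m. lk m k"] by (simp add: x_def y_def lookup_add)
  have ge: "lk y k \<le> lk a k" for k
  proof (cases "k \<in> ks y")
    case True then have "k \<notin> ks x" using disj by (auto simp: x_def y_def)
    then have "lk x k = 0" by (simp add: in_keys_iff)
    then show ?thesis using eqk[of k] by simp
  qed (simp add: in_keys_iff)
  have aw: "a = w + y"
    by (rule poly_mapping_eqI) (simp add: w_def lookup_add minus_poly_mapping.rep_eq ge)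
  have bw: "b = w + x"
  proof (rule poly_mapping_eqI)
    fix k show "lk b k = lk (w + x) k"
      using eqk[of k] ge[of k] by (simp add: w_def lookup_add minus_poly_mapping.rep_eq)
  qed
  have wM: "w \<in> MV V"
  proof -
    have "ks w \<subseteq> ks a" by (auto simp: w_def in_keys_iff minus_poly_mapping.rep_eq)
    then show ?thesis using ab(1) by (auto simp: MV_def)
  qed
  define tg where "tg = g - sg x 1"
  define th where "th = h - sg y 1"
  have r1: "rep G V (\<lambda>t. t < x + y) (tg * h)"
    unfolding tg_def x_def y_def by (rule rep_tail_mult[OF mg kg hG])
  have r2: "rep G V (\<lambda>t. t < x + y) (th * g)"
    using rep_tail_mult[OF mh kh gG] unfolding th_def x_def y_def by (simp add: add.commute)
  have r3: "rep G V (\<lambda>t. t < x + y) (tg * h - th * g)" by (rule rep_diff[OF r1 r2])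
  have r4: "rep G V (\<lambda>t. t < a + x) (sg w 1 * (tg * h - th * g))"
  proof (rule rep_shift[OF r3 wM])
    fix t assume "t < x + y"
    then have "w + t < w + (x + y)" by (rule add_strict_left_mono)
    then show "w + t < a + x" by (simp add: aw add_ac)
  qed
  have "sg a 1 * g - sg b 1 * h = sg w 1 * ((h - th) * g - (g - tg) * h)"
    by (simp add: aw bw th_def tg_def mult_single algebra_simps)
  also have "\<dots> = sg w 1 * (tg * h - th * g)" by (simp add: algebra_simps)
  finally show ?thesis using r4 by (simp add: x_def)
qed

lemma decomp:
  fixes s t Q :: mon
  assumes "s + Q = t + sg k 1" "lk Q k = 0"
  shows "s = (s - sg k 1) + sg k 1" "t = (s - sg k 1) + Q"
proof -
  have "lk s k + lk Q k = lk t k + 1"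
    using arg_cong[OF assms(1), of "\<lambda>m. lk m k"] by (simp add: lookup_add)
  then have ge: "1 \<le> lk s k" using assms(2) by simp
  show s1: "s = (s - sg k 1) + sg k 1"
    by (rule poly_mapping_eqI) (use ge in \<open>auto simp: lookup_add minus_poly_mapping.rep_eq lookup_single when_def\<close>)
  have "t + sg k 1 = ((s - sg k 1) + Q) + sg k 1"
    using assms(1) s1 by (metis add.assoc add.commute)
  then show "t = (s - sg k 1) + Q" by simp
qed

definition Gs :: "'k::comm_ring_1 \<Rightarrow> 'k \<Rightarrow> nat \<Rightarrow> 'k mpoly set" where
  "Gs \<beta> \<alpha> n = {gen \<beta> \<alpha> i j k | i j k. (i, j, k) \<in> Triples n}"

lemma gen_in: "1 \<le> i \<Longrightarrow> i < j \<Longrightarrow> j < k \<Longrightarrow> k \<le> n \<Longrightarrow> gen \<beta> \<alpha> i j k \<in> Gs \<beta> \<alpha> n"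
  unfolding Gs_def Triples_def by blast

lemma X_MV: "(u, v) \<in> V \<Longrightarrow> X u v \<in> MV V" by (simp add: MV_def ks_X)

lemma rep_addI: "rep G V P p \<Longrightarrow> rep G V P q \<Longrightarrow> rep G V P (p + q)" by (rule rep_add)
lemma rep_diffI: "rep G V P p \<Longrightarrow> rep G V P q \<Longrightarrow> rep G V P (p - q)" by (rule rep_diff)
lemma rep_uminusI: "rep G V P p \<Longrightarrow> rep G V P (- p)" by (rule rep_uminus)

lemma rep_var_term:
  "g \<in> G \<Longrightarrow> (u, v) \<in> V \<Longrightarrow> ht g = H \<Longrightarrow> X u v + H < T \<Longrightarrow> rep G V (\<lambda>t. t < T) (var u v * g)"
  unfolding var_X by (rule rep_lt_term) (auto simp: X_MV)

lemma rep_const_term: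
  "g \<in> G \<Longrightarrow> ht g = H \<Longrightarrow> H < T \<Longrightarrow> rep G V (\<lambda>t. t < T) (const c * g)"
  unfolding const_def by (rule rep_lt_term) (auto simp: MV_def)

lemma pair_gen:
  assumes "rep G V (\<lambda>x. x < T) S" "w \<in> MV V" "s = w + X u v" "t = w + X u' v'"
    "S = var u v * g - var u' v' * h" "s + ht g = w + T"
  shows "rep G V (\<lambda>x. x < s + ht g) (sg s 1 * g - sg t 1 * h)"
proof -
  have eq: "sg s 1 * g - sg t 1 * h = sg w 1 * S"
    by (simp add: assms(3,4,5) var_X mult_single algebra_simps)
  have "rep G V (\<lambda>x. x < s + ht g) (sg w 1 * S)"
  proof (rule rep_shift[OF assms(1,2)])
    fix x assume "x < T"
    then show "w + x < s + ht g" unfolding assms(6) by (rule add_strict_left_mono)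
  qed
  then show ?thesis using eq by simp
qed

lemma MV_minus: "s \<in> MV V \<Longrightarrow> s - r \<in> MV V"
  by (auto simp: MV_def in_keys_iff minus_poly_mapping.rep_eq)

context
  fixes \<beta> \<alpha> :: "'k::comm_ring_1" and n i a b c :: nat
  assumes ineq: "1 \<le> i" "i < a" "a < b" "b < c" "c \<le> n"
begin


lemma gins: "gen \<beta> \<alpha> i a b \<in> Gs \<beta> \<alpha> n" "gen \<beta> \<alpha> i a c \<in> Gs \<beta> \<alpha> n" "gen \<beta> \<alpha> i b c \<in> Gs \<beta> \<alpha> n" "gen \<beta> \<alpha> a b c \<in> Gs \<beta> \<alpha> n"
  using ineq by (auto intro!: gen_in)

lemma hts: "ht (gen \<beta> \<alpha> i a b) = X i a + X i b" "ht (gen \<beta> \<alpha> i a c) = X i a + X i c" "ht (gen \<beta> \<alpha> i b c) = X i b + X i c" "ht (gen \<beta> \<alpha> a b c) = X a b + X a c"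
  using ineq gen_ht_and_lk(1)[of i a b] gen_ht_and_lk(1)[of i a c] gen_ht_and_lk(1)[of i b c]
    gen_ht_and_lk(1)[of a b c] by auto

lemma vins: "(i,a) \<in> Vars n" "(i,b) \<in> Vars n" "(i,c) \<in> Vars n" "(a,b) \<in> Vars n" "(a,c) \<in> Vars n" "(b,c) \<in> Vars n"
  using ineq by (auto simp: Vars_def)

lemma cmps:
  "X a c + (X i a + X i b) < X i a + X i b + X i c"
  "X a b + (X i a + X i c) < X i a + X i b + X i c"
  "X a b + (X i b + X i c) < X i a + X i b + X i c"
  "X a c + (X i b + X i c) < X i a + X i b + X i c"
  "X i b + (X a b + X a c) < X i a + X i b + X i c"
  "X i c + (X a b + X a c) < X i a + X i b + X i c"
  "X b c + (X i a + X i b) < X i a + X i b + X i c"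
  "X b c + (X i a + X i c) < X i a + X i b + X i c"
  "X i a + X i c < X i a + X i b + X i c"
  "X i a + (X a b + X a c) < X i a + X i b + X i c"
  "X i b + X i c < X i a + X i b + X i c"
  subgoal unfolding X_def by (rule mon_lessI[of _ "(i,c)"]) (use ineq in \<open>auto simp: lookup_add lookup_single when_def\<close>)
  subgoal unfolding X_def by (rule mon_lessI[of _ "(i,b)"]) (use ineq in \<open>auto simp: lookup_add lookup_single when_def\<close>)
  subgoal unfolding X_def by (rule mon_lessI[of _ "(i,a)"]) (use ineq in \<open>auto simp: lookup_add lookup_single when_def\<close>)
  subgoal unfolding X_def by (rule mon_lessI[of _ "(i,a)"]) (use ineq in \<open>auto simp: lookup_add lookup_single when_def\<close>)
  subgoal unfolding X_def by (rule mon_lessI[of _ "(i,a)"]) (use ineq in \<open>auto simp: lookup_add lookup_single when_def\<close>)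
  subgoal unfolding X_def by (rule mon_lessI[of _ "(i,a)"]) (use ineq in \<open>auto simp: lookup_add lookup_single when_def\<close>)
  subgoal unfolding X_def by (rule mon_lessI[of _ "(i,c)"]) (use ineq in \<open>auto simp: lookup_add lookup_single when_def\<close>)
  subgoal unfolding X_def by (rule mon_lessI[of _ "(i,b)"]) (use ineq in \<open>auto simp: lookup_add lookup_single when_def\<close>)
  subgoal unfolding X_def by (rule mon_lessI[of _ "(i,b)"]) (use ineq in \<open>auto simp: lookup_add lookup_single when_def\<close>)
  subgoal unfolding X_def by (rule mon_lessI[of _ "(i,b)"]) (use ineq in \<open>auto simp: lookup_add lookup_single when_def\<close>)
  subgoal unfolding X_def by (rule mon_lessI[of _ "(i,a)"]) (use ineq in \<open>auto simp: lookup_add lookup_single when_def\<close>)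
  done

lemma S12_rep: "rep (Gs \<beta> \<alpha> n) (Vars n) (\<lambda>t. t < X i a + X i b + X i c)
   (var i c * gen \<beta> \<alpha> i a b - var i b * gen \<beta> \<alpha> i a c)"
proof -
  have t1: "rep (Gs \<beta> \<alpha> n) (Vars n) (\<lambda>t. t < X i a + X i b + X i c) (var a c * gen \<beta> \<alpha> i a b)"
    by (rule rep_var_term[OF gins(1) vins(5) hts(1) cmps(1)])
  have t2: "rep (Gs \<beta> \<alpha> n) (Vars n) (\<lambda>t. t < X i a + X i b + X i c) (var a b * gen \<beta> \<alpha> i a c)"
    by (rule rep_var_term[OF gins(2) vins(4) hts(2) cmps(2)])
  have t3: "rep (Gs \<beta> \<alpha> n) (Vars n) (\<lambda>t. t < X i a + X i b + X i c) (var a b * gen \<beta> \<alpha> i b c)"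
    by (rule rep_var_term[OF gins(3) vins(4) hts(3) cmps(3)])
  have t4: "rep (Gs \<beta> \<alpha> n) (Vars n) (\<lambda>t. t < X i a + X i b + X i c) (var a c * gen \<beta> \<alpha> i b c)"
    by (rule rep_var_term[OF gins(3) vins(5) hts(3) cmps(4)])
  have t5: "rep (Gs \<beta> \<alpha> n) (Vars n) (\<lambda>t. t < X i a + X i b + X i c) (var i b * gen \<beta> \<alpha> a b c)"
    by (rule rep_var_term[OF gins(4) vins(2) hts(4) cmps(5)])
  have t6: "rep (Gs \<beta> \<alpha> n) (Vars n) (\<lambda>t. t < X i a + X i b + X i c) (var i c * gen \<beta> \<alpha> a b c)"
    by (rule rep_var_term[OF gins(4) vins(3) hts(4) cmps(6)])
  show ?thesis unfolding S12_id by (intro rep_addI rep_diffI t1 t2 t3 t4 t5 t6)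
qed

lemma S13_rep: "rep (Gs \<beta> \<alpha> n) (Vars n) (\<lambda>t. t < X i a + X i b + X i c)
   (var i c * gen \<beta> \<alpha> i a b - var i a * gen \<beta> \<alpha> i b c)"
proof -
  have t1: "rep (Gs \<beta> \<alpha> n) (Vars n) (\<lambda>t. t < X i a + X i b + X i c) (var b c * gen \<beta> \<alpha> i a b)"
    by (rule rep_var_term[OF gins(1) vins(6) hts(1) cmps(7)])
  have t2: "rep (Gs \<beta> \<alpha> n) (Vars n) (\<lambda>t. t < X i a + X i b + X i c) (var a b * gen \<beta> \<alpha> i a c)"
    by (rule rep_var_term[OF gins(2) vins(4) hts(2) cmps(2)])
  have t3: "rep (Gs \<beta> \<alpha> n) (Vars n) (\<lambda>t. t < X i a + X i b + X i c) (var b c * gen \<beta> \<alpha> i a c)"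
    by (rule rep_var_term[OF gins(2) vins(6) hts(2) cmps(8)])
  have t4: "rep (Gs \<beta> \<alpha> n) (Vars n) (\<lambda>t. t < X i a + X i b + X i c) (const \<beta> * gen \<beta> \<alpha> i a c)"
    by (rule rep_const_term[OF gins(2) hts(2) cmps(9)])
  have t5: "rep (Gs \<beta> \<alpha> n) (Vars n) (\<lambda>t. t < X i a + X i b + X i c) (var i a * gen \<beta> \<alpha> a b c)"
    by (rule rep_var_term[OF gins(4) vins(1) hts(4) cmps(10)])
  have t6: "rep (Gs \<beta> \<alpha> n) (Vars n) (\<lambda>t. t < X i a + X i b + X i c) (var a b * gen \<beta> \<alpha> i b c)"
    by (rule rep_var_term[OF gins(3) vins(4) hts(3) cmps(3)])
  have t7: "rep (Gs \<beta> \<alpha> n) (Vars n) (\<lambda>t. t < X i a + X i b + X i c) (const \<beta> * gen \<beta> \<alpha> i b c)"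
    by (rule rep_const_term[OF gins(3) hts(3) cmps(11)])
  have t8: "rep (Gs \<beta> \<alpha> n) (Vars n) (\<lambda>t. t < X i a + X i b + X i c) (var i c * gen \<beta> \<alpha> a b c)"
    by (rule rep_var_term[OF gins(4) vins(3) hts(4) cmps(6)])
  show ?thesis unfolding S13_id by (intro rep_addI rep_diffI t1 t2 t3 t4 t5 t6 t7 t8)
qed

lemma S23_rep: "rep (Gs \<beta> \<alpha> n) (Vars n) (\<lambda>t. t < X i a + X i b + X i c)
   (var i b * gen \<beta> \<alpha> i a c - var i a * gen \<beta> \<alpha> i b c)"
proof -
  have t1: "rep (Gs \<beta> \<alpha> n) (Vars n) (\<lambda>t. t < X i a + X i b + X i c) (var a c * gen \<beta> \<alpha> i a b)"
    by (rule rep_var_term[OF gins(1) vins(5) hts(1) cmps(1)])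
  have t2: "rep (Gs \<beta> \<alpha> n) (Vars n) (\<lambda>t. t < X i a + X i b + X i c) (var b c * gen \<beta> \<alpha> i a b)"
    by (rule rep_var_term[OF gins(1) vins(6) hts(1) cmps(7)])
  have t3: "rep (Gs \<beta> \<alpha> n) (Vars n) (\<lambda>t. t < X i a + X i b + X i c) (var b c * gen \<beta> \<alpha> i a c)"
    by (rule rep_var_term[OF gins(2) vins(6) hts(2) cmps(8)])
  have t4: "rep (Gs \<beta> \<alpha> n) (Vars n) (\<lambda>t. t < X i a + X i b + X i c) (const \<beta> * gen \<beta> \<alpha> i a c)"
    by (rule rep_const_term[OF gins(2) hts(2) cmps(9)])
  have t5: "rep (Gs \<beta> \<alpha> n) (Vars n) (\<lambda>t. t < X i a + X i b + X i c) (var i a * gen \<beta> \<alpha> a b c)"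
    by (rule rep_var_term[OF gins(4) vins(1) hts(4) cmps(10)])
  have t6: "rep (Gs \<beta> \<alpha> n) (Vars n) (\<lambda>t. t < X i a + X i b + X i c) (var a c * gen \<beta> \<alpha> i b c)"
    by (rule rep_var_term[OF gins(3) vins(5) hts(3) cmps(4)])
  have t7: "rep (Gs \<beta> \<alpha> n) (Vars n) (\<lambda>t. t < X i a + X i b + X i c) (const \<beta> * gen \<beta> \<alpha> i b c)"
    by (rule rep_const_term[OF gins(3) hts(3) cmps(11)])
  have t8: "rep (Gs \<beta> \<alpha> n) (Vars n) (\<lambda>t. t < X i a + X i b + X i c) (var i b * gen \<beta> \<alpha> a b c)"
    by (rule rep_var_term[OF gins(4) vins(2) hts(4) cmps(5)])
  show ?thesis unfolding S23_id minus_mult_left[symmetric] by (intro rep_addI rep_diffI rep_uminusI t1 t2 t3 t4 t5 t6 t7 t8)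
qed

lemma S12_pair:
  assumes "s \<in> MV (Vars n)" "s + ht (gen \<beta> \<alpha> i a b) = t + ht (gen \<beta> \<alpha> i a c)"
  shows "rep (Gs \<beta> \<alpha> n) (Vars n) (\<lambda>x. x < s + ht (gen \<beta> \<alpha> i a b))
     (sg s 1 * gen \<beta> \<alpha> i a b - sg t 1 * gen \<beta> \<alpha> i a c)"
proof -
  from assms(2) have "s + X i b + X i a = t + X i c + X i a" by (simp add: hts add_ac)
  then have e: "s + X i b = t + sg (i,c) 1" by (simp add: X_def)
  have l0: "lk (X i b) (i,c) = 0" using ineq by (simp add: X_def lookup_single)
  define w where "w = s - sg (i,c) 1"
  have sw: "s = w + X i c" and tw: "t = w + X i b" using decomp[OF e l0] by (simp_all add: w_def X_def)
  have wM: "w \<in> MV (Vars n)" unfolding w_def by (rule MV_minus[OF assms(1)])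
  show ?thesis
    by (rule pair_gen[OF S12_rep wM sw tw refl]) (simp add: sw hts add_ac)
qed

lemma S13_pair:
  assumes "s \<in> MV (Vars n)" "s + ht (gen \<beta> \<alpha> i a b) = t + ht (gen \<beta> \<alpha> i b c)"
  shows "rep (Gs \<beta> \<alpha> n) (Vars n) (\<lambda>x. x < s + ht (gen \<beta> \<alpha> i a b))
     (sg s 1 * gen \<beta> \<alpha> i a b - sg t 1 * gen \<beta> \<alpha> i b c)"
proof -
  from assms(2) have "s + X i a + X i b = t + X i c + X i b" by (simp add: hts add_ac)
  then have e: "s + X i a = t + sg (i,c) 1" by (simp add: X_def)
  have l0: "lk (X i a) (i,c) = 0" using ineq by (simp add: X_def lookup_single)
  define w where "w = s - sg (i,c) 1"
  have sw: "s = w + X i c" and tw: "t = w + X i a" using decomp[OF e l0] by (simp_all add: w_def X_def)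
  have wM: "w \<in> MV (Vars n)" unfolding w_def by (rule MV_minus[OF assms(1)])
  show ?thesis
    by (rule pair_gen[OF S13_rep wM sw tw refl]) (simp add: sw hts add_ac)
qed

lemma S23_pair:
  assumes "s \<in> MV (Vars n)" "s + ht (gen \<beta> \<alpha> i a c) = t + ht (gen \<beta> \<alpha> i b c)"
  shows "rep (Gs \<beta> \<alpha> n) (Vars n) (\<lambda>x. x < s + ht (gen \<beta> \<alpha> i a c))
     (sg s 1 * gen \<beta> \<alpha> i a c - sg t 1 * gen \<beta> \<alpha> i b c)"
proof -
  from assms(2) have "s + X i a + X i c = t + X i b + X i c" by (simp add: hts add_ac)
  then have e: "s + X i a = t + sg (i,b) 1" by (simp add: X_def)
  have l0: "lk (X i a) (i,b) = 0" using ineq by (simp add: X_def lookup_single)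
  define w where "w = s - sg (i,b) 1"
  have sw: "s = w + X i b" and tw: "t = w + X i a" using decomp[OF e l0] by (simp_all add: w_def X_def)
  have wM: "w \<in> MV (Vars n)" unfolding w_def by (rule MV_minus[OF assms(1)])
  show ?thesis
    by (rule pair_gen[OF S23_rep wM sw tw refl]) (simp add: sw hts add_ac)
qed

end

lemma ks_XX: "ks (X u v + X u' v') \<subseteq> {(u, v), (u', v')}"
  using keys_add[of "X u v" "X u' v'"] by (auto simp: ks_X)

lemma Gs_elem:
  assumes "g \<in> Gs \<beta> \<alpha> n"
  obtains i j k where "1 \<le> i" "i < j" "j < k" "k \<le> n" "g = gen \<beta> \<alpha> i j k" "ht g = X i j + X i k"
  using assms gen_ht_and_lk(1) unfolding Gs_def Triples_def by blast

lemma Gs_props: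
  assumes "g \<in> Gs \<beta> \<alpha> n"
  shows "g \<noteq> 0" "lk g (ht g) = 1" "\<And>t. t \<in> ks g \<Longrightarrow> t \<in> MV (Vars n)"
proof -
  obtain i j k where ijk: "1 \<le> i" "i < j" "j < k" "k \<le> n" "g = gen \<beta> \<alpha> i j k" "ht g = X i j + X i k"
    using Gs_elem[OF assms] by blast
  show l: "lk g (ht g) = 1" using gen_ht_and_lk(2)[OF ijk(2,3)] ijk by simp
  show "g \<noteq> 0" using l by auto
  fix t assume "t \<in> ks g"
  then have "t \<in> {X i k + X i j, X i j + X j k, X i k + X j k, X i k, 0}" using keys_gen ijk(5) by blast
  moreover have v: "(i,j) \<in> Vars n" "(i,k) \<in> Vars n" "(j,k) \<in> Vars n" using ijk by (auto simp: Vars_def)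
  moreover have "X i k + X i j \<in> MV (Vars n)" "X i j + X j k \<in> MV (Vars n)" "X i k + X j k \<in> MV (Vars n)"
    "X i k \<in> MV (Vars n)" "0 \<in> MV (Vars n)"
    by (rule MV_add X_MV v | simp add: MV_def)+
  ultimately show "t \<in> MV (Vars n)" by blast
qed

lemma sym_pair:
  assumes "rep G V (\<lambda>x. x < b + ht h) (sg b 1 * h - sg a 1 * g)" "a + ht g = b + ht h"
  shows "rep G V (\<lambda>x. x < a + ht g) (sg a 1 * g - sg b 1 * h)"
  using rep_uminus[OF assms(1)] assms(2) by (simp add: minus_diff_eq)

lemma spoly_Gs:
  assumes gG: "g \<in> Gs \<beta> \<alpha> n" and hG: "h \<in> Gs \<beta> \<alpha> n" and aM: "a \<in> MV (Vars n)" and bM: "b \<in> MV (Vars n)"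
    and e: "a + ht g = b + ht h"
  shows "rep (Gs \<beta> \<alpha> n) (Vars n) (\<lambda>t. t < a + ht g) (sg a 1 * g - sg b 1 * h)"
proof -
  obtain i j k where g: "1 \<le> i" "i < j" "j < k" "k \<le> n" "g = gen \<beta> \<alpha> i j k" "ht g = X i j + X i k"
    using Gs_elem[OF gG] by blast
  obtain i' j' k' where h: "1 \<le> i'" "i' < j'" "j' < k'" "k' \<le> n" "h = gen \<beta> \<alpha> i' j' k'" "ht h = X i' j' + X i' k'"
    using Gs_elem[OF hG] by blast
  show ?thesis
  proof (cases "{(i,j),(i,k)} \<inter> {(i',j'),(i',k')} = {}")
    case True
    have s1: "ks (ht g) \<subseteq> {(i,j),(i,k)}" unfolding g(6) by (rule ks_XX)
    have s2: "ks (ht h) \<subseteq> {(i',j'),(i',k')}" unfolding h(6) by (rule ks_XX)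
    have "ks (ht g) \<inter> ks (ht h) = {}" using True s1 s2 by blast
    then show ?thesis
      using prod_crit[OF gG hG Gs_props(1,2)[OF gG] Gs_props(1,2)[OF hG] Gs_props(3)[OF gG] Gs_props(3)[OF hG]
          _ aM e] by blast
  next
    case False
    then have ii: "i' = i" and cs: "j = j' \<or> j = k' \<or> k = j' \<or> k = k'" by auto
    consider "j = j'" "k = k'" | "j = j'" "k < k'" | "j = j'" "k' < k" | "j = k'" | "k = j'"
      | "k = k'" "j < j'" | "k = k'" "j' < j"
      using cs by linarith
    then show ?thesis
    proof cases
      case 1
      then have "h = g" using g h ii by simp
      then have "a = b" using e by simp
      then show ?thesis using \<open>h = g\<close> by (simp add: rep.rep_zero)
    next
      case 2
      have e2: "a + ht (gen \<beta> \<alpha> i j k) = b + ht (gen \<beta> \<alpha> i j k')"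
        using e unfolding g(5) h(5) ii 2(1)[symmetric] .
      show ?thesis unfolding g(5) h(5) ii 2(1)[symmetric]
        by (rule S12_pair[OF g(1,2,3) 2(2) h(4) aM e2])
    next
      case 3
      have jk': "j < k'" using h(3) 3(1) by simp
      have e2: "b + ht (gen \<beta> \<alpha> i j k') = a + ht (gen \<beta> \<alpha> i j k)"
        using e unfolding g(5) h(5) ii 3(1)[symmetric] by simp
      show ?thesis unfolding g(5) h(5) ii 3(1)[symmetric]
        by (rule sym_pair[OF S12_pair[OF g(1,2) jk' 3(2) g(4) bM e2] e2[symmetric]])
    next
      case 4
      have ij': "i < j'" using h(2) ii by simp
      have j'j: "j' < j" using h(3) 4 by simp
      have e2: "b + ht (gen \<beta> \<alpha> i j' j) = a + ht (gen \<beta> \<alpha> i j k)"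
        using e unfolding g(5) h(5) ii 4[symmetric] by simp
      show ?thesis unfolding g(5) h(5) ii 4[symmetric]
        by (rule sym_pair[OF S13_pair[OF g(1) ij' j'j g(3) g(4) bM e2] e2[symmetric]])
    next
      case 5
      have kk': "k < k'" using h(3) 5 by simp
      have e2: "a + ht (gen \<beta> \<alpha> i j k) = b + ht (gen \<beta> \<alpha> i k k')"
        using e unfolding g(5) h(5) ii 5[symmetric] .
      show ?thesis unfolding g(5) h(5) ii 5[symmetric]
        by (rule S13_pair[OF g(1,2,3) kk' h(4) aM e2])
    next
      case 6
      have j'k: "j' < k" using h(3) 6 by simp
      have e2: "a + ht (gen \<beta> \<alpha> i j k) = b + ht (gen \<beta> \<alpha> i j' k)"
        using e unfolding g(5) h(5) ii 6(1)[symmetric] .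
      show ?thesis unfolding g(5) h(5) ii 6(1)[symmetric]
        by (rule S23_pair[OF g(1,2) 6(2) j'k g(4) aM e2])
    next
      case 7
      have ij': "i < j'" using h(2) ii by simp
      have e2: "b + ht (gen \<beta> \<alpha> i j' k) = a + ht (gen \<beta> \<alpha> i j k)"
        using e unfolding g(5) h(5) ii 7(1)[symmetric] by simp
      show ?thesis unfolding g(5) h(5) ii 7(1)[symmetric]
        by (rule sym_pair[OF S23_pair[OF g(1) ij' 7(2) g(3) g(4) bM e2] e2[symmetric]])
    qed
  qed
qed

lemma finite_Vars: "finite (Vars n)"
proof -
  have "Vars n \<subseteq> {..n} \<times> {..n}" by (auto simp: Vars_def)
  then show ?thesis by (rule finite_subset) simp
qed

lemma gbctx_Gs: "gbctx (Gs \<beta> \<alpha> n) (Vars n)"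
proof
  show "finite (Vars n)" by (rule finite_Vars)
  fix g assume "g \<in> Gs \<beta> \<alpha> n"
  then show "g \<noteq> 0 \<and> lk g (ht g) = 1" using Gs_props(1,2) by blast
next
  fix g t assume "g \<in> Gs \<beta> \<alpha> n" "t \<in> ks g"
  then show "t \<in> MV (Vars n)" using Gs_props(3) by blast
next
  fix g h a b
  assume "g \<in> Gs \<beta> \<alpha> n" "h \<in> Gs \<beta> \<alpha> n" "a \<in> MV (Vars n)" "b \<in> MV (Vars n)" "a + ht g = b + ht h"
  then show "rep (Gs \<beta> \<alpha> n) (Vars n) (\<lambda>t. t < a + ht g) (sg a 1 * g - sg b 1 * h)"
    by (rule spoly_Gs)
qed

lemma Xring_uminus: "q \<in> Xring n \<Longrightarrow> - q \<in> Xring n"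
  by (simp add: Xring_def in_keys_iff)

lemma ideal_gen_uminus_sub:
  fixes S :: "'k::comm_ring_1 mpoly set"
  shows "ideal_gen n S \<subseteq> ideal_gen n (uminus ` S)"
proof
  fix p assume "p \<in> ideal_gen n S"
  then obtain F q where F: "finite F" "F \<subseteq> S" "\<And>f. f \<in> F \<Longrightarrow> q f \<in> Xring n" "p = (\<Sum>f\<in>F. q f * f)"
    unfolding ideal_gen_def by blast
  define F' where "F' = uminus ` F"
  define q' where "q' f = - q (- f)" for f
  have "finite F'" "F' \<subseteq> uminus ` S" using F by (auto simp: F'_def)
  moreover have "\<And>f. f \<in> F' \<Longrightarrow> q' f \<in> Xring n" using F(3) by (auto simp: F'_def q'_def Xring_uminus)
  moreover have "p = (\<Sum>f\<in>F'. q' f * f)"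
  proof -
    have "(\<Sum>f\<in>F'. q' f * f) = (\<Sum>f\<in>F. q' (- f) * (- f))"
      unfolding F'_def by (simp add: sum.reindex inj_on_def comp_def)
    also have "\<dots> = (\<Sum>f\<in>F. q f * f)" by (simp add: q'_def)
    finally show ?thesis using F(4) by simp
  qed
  ultimately show "p \<in> ideal_gen n (uminus ` S)" unfolding ideal_gen_def by blast
qed

lemma ideal_gen_uminus:
  fixes S :: "'k::comm_ring_1 mpoly set"
  shows "ideal_gen n (uminus ` S) = ideal_gen n S"
proof
  show "ideal_gen n (uminus ` S) \<subseteq> ideal_gen n S"
    using ideal_gen_uminus_sub[of n "uminus ` S"] by (simp add: image_image)
qed (rule ideal_gen_uminus_sub)

lemma gen_Jgen: "gen \<beta> \<alpha> i j k = - Jgen \<beta> \<alpha> i j k"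
  unfolding gen_def Jgen_def by (simp add: algebra_simps)

lemma Gs_Jgen: "Gs \<beta> \<alpha> n = uminus ` {Jgen \<beta> \<alpha> i j k | i j k. (i, j, k) \<in> Triples n}"
  unfolding Gs_def gen_Jgen by blast

theorem main_gb:
  fixes \<beta> \<alpha> :: "'k::comm_ring_1" and n :: nat
  shows "is_groebner_basis var_gt n (Gs \<beta> \<alpha> n) (Jideal \<beta> \<alpha> n)"
proof -
  interpret gbctx "Gs \<beta> \<alpha> n" "Vars n" by (rule gbctx_Gs)
  have id: "ideal_gen n (Gs \<beta> \<alpha> n) = Jideal \<beta> \<alpha> n"
    unfolding Jideal_def Gs_Jgen by (rule ideal_gen_uminus)
  show ?thesis
    unfolding is_groebner_basis_def
  proof (intro conjI ballI)
    fix g assume "g \<in> Gs \<beta> \<alpha> n"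
    then show "monic var_gt g" unfolding monic_def using Gs_props(1,2) by blast
  next
    show "ideal_gen n (Gs \<beta> \<alpha> n) = Jideal \<beta> \<alpha> n" by (rule id)
  next
    fix p assume "p \<in> Jideal \<beta> \<alpha> n"
    then have "p \<in> ideal_gen n (Gs \<beta> \<alpha> n)" using id by simp
    then show "(red var_gt (Gs \<beta> \<alpha> n))\<^sup>*\<^sup>* p 0" by (rule red_zero[OF ideal_rep])
  qed
qed

theorem proposition4p9:
  fixes \<beta> \<alpha> :: "'k::comm_ring_1" and n :: nat
  assumes "n \<ge> 1"
  shows "is_groebner_basis var_gt n
           {var i k * var i j - var i j * var j k + var i k * var j k
              + const \<beta> * var i k + const \<alpha> | i j k. (i, j, k) \<in> Triples n}
           (Jideal \<beta> \<alpha> n)"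
proof -
  have "is_groebner_basis var_gt n (Gs \<beta> \<alpha> n) (Jideal \<beta> \<alpha> n)" by (rule main_gb)
  then show ?thesis unfolding Gs_def gen_def .
qed

end
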